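(* Let $K$ be a finite field of odd characteristic and $d:V\times V\to K$ a non-degenerate symmetric bilinear form with $n=\dim V$. Let $\mathcal{X},\mathcal{Y}$ be orthogonal bases of $d$ (viewed as sets of $1$-dimensional subspaces) with addresses $(n-s:s)$ and $(n-r:r)$ respectively. (i) If $n$ is odd, then $\mathcal{X}\varphi=\mathcal{Y}$ for some $(\varphi,\hat\varphi)\in\operatorname{Isom}^*(d)$ if and only if $s=r$. (ii) If $n$ is even, then $\mathcal{X}\varphi=\mathcal{Y}$ for some $(\varphi,\hat\varphi)\in\operatorname{Isom}^*(d)$ if and only if $s=r$ or $s=n-r$.
   Context: An orthogonal basis of $d$ is a basis $\{x_1,\dots,x_n\}$ of $V$ with $d(x_i,x_j)=0$ for $i\ne j$; it is identified with the set $\{\langle x_i\rangle\}$ of lines, and $\mathcal{X}\varphi=\{X\varphi:X\in\mathcal{X}\}$. Its address is $(n-s:s)$ where $s$ is the number of $i$ for which $d(x_i,x_i)$ is a non-square in $K$. $\operatorname{Isom}^*(d)=\{(\varphi,\hat\varphi)\in\mathrm{GL}(V)\times K^\times: d(u\varphi,v\varphi)=\hat\varphi\, d(u,v)\ \forall u,v\}$. *)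

theory Defs
  imports "HOL-Analysis.Cartesian_Space"
begin

text \<open>The space V is modelled as K^n = 'k^'n with n = CARD('n).\<close>

definition bilinear_form :: "('k::field^'n \<Rightarrow> 'k^'n \<Rightarrow> 'k) \<Rightarrow> bool" where
  "bilinear_form d \<longleftrightarrow>
     (\<forall>u v w. d (u + v) w = d u w + d v w) \<and>
     (\<forall>u v w. d u (v + w) = d u v + d u w) \<and>
     (\<forall>a u v. d (a *s u) v = a * d u v) \<and>
     (\<forall>a u v. d u (a *s v) = a * d u v)"

definition symmetric_form :: "('k::field^'n \<Rightarrow> 'k^'n \<Rightarrow> 'k) \<Rightarrow> bool" where
  "symmetric_form d \<longleftrightarrow> (\<forall>u v. d u v = d v u)"

definition nondegenerate_form :: "('k::field^'n \<Rightarrow> 'k^'n \<Rightarrow> 'k) \<Rightarrow> bool" where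
  "nondegenerate_form d \<longleftrightarrow> (\<forall>u. (\<forall>v. d u v = 0) \<longrightarrow> u = 0)"

text \<open>An orthogonal basis of d, given by its vectors.\<close>
definition orthogonal_basis :: "('k::field^'n \<Rightarrow> 'k^'n \<Rightarrow> 'k) \<Rightarrow> ('k^'n) set \<Rightarrow> bool" where
  "orthogonal_basis d B \<longleftrightarrow> vec.independent B \<and> vec.span B = UNIV \<and>
     (\<forall>x\<in>B. \<forall>y\<in>B. x \<noteq> y \<longrightarrow> d x y = 0)"

text \<open>The set of 1-dimensional subspaces spanned by the basis vectors.\<close>
definition basis_lines :: "('k::field^'n) set \<Rightarrow> ('k^'n) set set" where
  "basis_lines B = (\<lambda>x. vec.span {x}) ` B"

text \<open>The number s in the address (n-s:s): basis vectors x with d(x,x) a non-square.\<close>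
definition address_nonsquares :: "('k::field^'n \<Rightarrow> 'k^'n \<Rightarrow> 'k) \<Rightarrow> ('k^'n) set \<Rightarrow> nat" where
  "address_nonsquares d B = card {x\<in>B. \<not> (\<exists>y. d x x = y ^ 2)}"

definition Isom_star :: "('k::field^'n \<Rightarrow> 'k^'n \<Rightarrow> 'k) \<Rightarrow> (('k^'n \<Rightarrow> 'k^'n) \<times> 'k) set" where
  "Isom_star d = {(\<phi>, c). Vector_Spaces.linear (*s) (*s) \<phi> \<and> bij \<phi> \<and> c \<noteq> 0 \<and>
                        (\<forall>u v. d (\<phi> u) (\<phi> v) = c * d u v)}"

end

theory Submission imports Defs "HOL-Analysis.Determinants" begin

definition sqr :: "'a::field \<Rightarrow> bool" where "sqr a \<longleftrightarrow> (\<exists>y. a = y ^ 2)"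

lemma nonsq_mult_nonsq:
  fixes a b :: "'k::field"
  assumes fin: "finite (UNIV :: 'k set)" and a: "a \<noteq> 0" "\<not> sqr a" and b: "b \<noteq> 0" "\<not> sqr b"
  shows "sqr (a * b)"
proof -
  let ?U = "UNIV - {0::'k}"
  let ?S = "(\<lambda>y. y^2) ` ?U"
  let ?N = "{x\<in>?U. \<not> sqr x}"
  define rt where "rt s = (SOME y::'k. y^2 = s)" for s
  have finU: "finite ?U" "finite ?S" "finite ?N" using fin by auto
  have rt: "rt s ^ 2 = s" if "s \<in> ?S" for s
    unfolding rt_def using that by (auto intro: someI)
  have "?U \<subseteq> rt ` ?S \<union> (\<lambda>s. - rt s) ` ?S"
  proof
    fix x assume x: "x \<in> ?U"
    hence xs: "x^2 \<in> ?S" by auto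
    have "x^2 = rt (x^2) ^ 2" using rt[OF xs] by simp
    hence "(x - rt (x^2)) * (x + rt (x^2)) = 0" by (simp add: power2_eq_square algebra_simps)
    hence "x = rt (x^2) \<or> x = - rt (x^2)" by (auto simp: eq_neg_iff_add_eq_0)
    thus "x \<in> rt ` ?S \<union> (\<lambda>s. - rt s) ` ?S" using xs by blast
  qed
  hence "card ?U \<le> card (rt ` ?S \<union> (\<lambda>s. - rt s) ` ?S)" using finU by (intro card_mono) auto
  also have "\<dots> \<le> card (rt ` ?S) + card ((\<lambda>s. - rt s) ` ?S)" by (rule card_Un_le)
  also have "\<dots> \<le> card ?S + card ?S" by (intro add_mono card_image_le finU)
  finally have cU: "card ?U \<le> card ?S + card ?S" .
  have "?S \<inter> ?N = {}" by (auto simp: sqr_def)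
  moreover have "?S \<union> ?N = ?U" by (auto simp: sqr_def)
  ultimately have "card ?U = card ?S + card ?N" using finU by (metis card_Un_disjoint)
  hence cN: "card ?N \<le> card ?S" using cU by simp
  have sub: "(\<lambda>y. a * y) ` ?S \<subseteq> ?N"
  proof
    fix z assume "z \<in> (\<lambda>y. a * y) ` ?S"
    then obtain y where y: "y \<noteq> 0" "z = a * y^2" by auto
    have "\<not> sqr z"
    proof
      assume "sqr z" then obtain w where "z = w^2" by (auto simp: sqr_def)
      hence "a = (w / y)^2" using y by (simp add: power_divide field_simps)
      thus False using a by (auto simp: sqr_def)
    qed
    thus "z \<in> ?N" using y a by auto
  qed
  have "inj_on (\<lambda>y. a * y) ?S" using a by (auto simp: inj_on_def)
  hence "card ((\<lambda>y. a * y) ` ?S) = card ?S" by (rule card_image)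
  moreover have "card ((\<lambda>y. a * y) ` ?S) \<le> card ?N" using sub finU by (intro card_mono) auto
  ultimately have "(\<lambda>y. a * y) ` ?S = ?N" using sub cN finU by (intro card_subset_eq) auto
  moreover have "b \<in> ?N" using b by auto
  ultimately obtain y where "b = a * y^2" by auto
  hence "a * b = (a * y)^2" by (simp add: power2_eq_square)
  thus ?thesis by (auto simp: sqr_def)
qed

lemma sqr_mult_iff:
  fixes a b :: "'k::field"
  assumes fin: "finite (UNIV :: 'k set)" and a: "a \<noteq> 0" and b: "b \<noteq> 0"
  shows "sqr (a * b) \<longleftrightarrow> (sqr a \<longleftrightarrow> sqr b)"
proof (cases "sqr a")
  case True
  then obtain u where u: "a = u^2" by (auto simp: sqr_def)
  with a have u0: "u \<noteq> 0" by auto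
  show ?thesis
  proof
    assume "sqr (a*b)" then obtain w where "a*b = w^2" by (auto simp: sqr_def)
    hence "b = (w/u)^2" using u u0 by (simp add: power_divide field_simps)
    thus "sqr a \<longleftrightarrow> sqr b" using True by (auto simp: sqr_def)
  next
    assume "sqr a \<longleftrightarrow> sqr b"
    with True obtain v where "b = v^2" by (auto simp: sqr_def)
    hence "a*b = (u * v)^2" using u by (simp add: power_mult_distrib)
    thus "sqr (a*b)" unfolding sqr_def by blast
  qed
next
  case False
  show ?thesis
  proof (cases "sqr b")
    case True
    then obtain u where u: "b = u^2" by (auto simp: sqr_def)
    with b have u0: "u \<noteq> 0" by auto
    have "\<not> sqr (a*b)"
    proof
      assume "sqr (a*b)" then obtain w where "a*b = w^2" by (auto simp: sqr_def)
      hence "a = (w/u)^2" using u u0 by (simp add: power_divide field_simps)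
      thus False using False by (auto simp: sqr_def)
    qed
    thus ?thesis using False True by simp
  next
    case F2: False
    thus ?thesis using nonsq_mult_nonsq[OF fin a False b F2] False by simp
  qed
qed

context
  fixes d :: "'k::field^'n \<Rightarrow> 'k^'n \<Rightarrow> 'k"
  assumes bl: "bilinear_form d"
begin

lemma bl_add_l: "d (u + v) w = d u w + d v w" using bl by (simp add: bilinear_form_def)
lemma bl_add_r: "d u (v + w) = d u v + d u w" using bl by (simp add: bilinear_form_def)
lemma bl_scale_l: "d (a *s u) v = a * d u v" using bl by (simp add: bilinear_form_def)
lemma bl_scale_r: "d u (a *s v) = a * d u v" using bl by (simp add: bilinear_form_def)
lemma bl_zero_l: "d 0 v = 0" using bl_scale_l[of 0 0 v] by simp
lemma bl_zero_r: "d u 0 = 0" using bl_scale_r[of u 0 0] by simp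

lemma bl_span_l:
  assumes "\<forall>x\<in>B. d x w = 0" "u \<in> vec.span B" shows "d u w = 0"
proof -
  have "vec.subspace {u. d u w = 0}"
    by (auto simp: vec.subspace_def bl_zero_l bl_add_l bl_scale_l)
  thus ?thesis using vec.span_induct[of u B "\<lambda>u. d u w = 0"] assms by auto
qed

lemma bl_span_r:
  assumes "\<forall>x\<in>B. d w x = 0" "u \<in> vec.span B" shows "d w u = 0"
proof -
  have "vec.subspace {u. d w u = 0}"
    by (auto simp: vec.subspace_def bl_zero_r bl_add_r bl_scale_r)
  thus ?thesis using vec.span_induct[of u B "\<lambda>u. d w u = 0"] assms by auto
qed

lemma bl_sum_l: "finite S \<Longrightarrow> d (sum f S) v = (\<Sum>i\<in>S. d (f i) v)"
  by (induction S rule: finite_induct) (auto simp: bl_zero_l bl_add_l)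
lemma bl_sum_r: "finite S \<Longrightarrow> d v (sum f S) = (\<Sum>i\<in>S. d v (f i))"
  by (induction S rule: finite_induct) (auto simp: bl_zero_r bl_add_r)

end

lemma ob_facts:
  fixes d :: "'k::field^'n \<Rightarrow> 'k^'n \<Rightarrow> 'k"
  assumes bl: "bilinear_form d" and nd: "nondegenerate_form d" and ob: "orthogonal_basis d B"
  shows "finite B" "card B = CARD('n)" "0 \<notin> B" "\<And>x. x \<in> B \<Longrightarrow> d x x \<noteq> 0"
    "\<And>x y. x \<in> B \<Longrightarrow> y \<in> B \<Longrightarrow> y \<in> vec.span {x} \<Longrightarrow> x = y"
proof -
  have ind: "vec.independent B" and sp: "vec.span B = UNIV" and orth: "\<forall>x\<in>B. \<forall>y\<in>B. x \<noteq> y \<longrightarrow> d x y = 0"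
    using ob by (auto simp: orthogonal_basis_def)
  show "finite B" using ind by (rule vec.finiteI_independent)
  show "card B = CARD('n)" using vec.basis_card_eq_dim[of B UNIV] ind sp vec_dim_card by auto
  show z: "0 \<notin> B" using ind vec.dependent_zero by blast
  show "d x x \<noteq> 0" if x: "x \<in> B" for x
  proof
    assume "d x x = 0"
    hence "\<forall>y\<in>B. d x y = 0" using orth x by auto
    hence "\<forall>v. d x v = 0" using bl_span_r[OF bl, of B x] sp by blast
    hence "x = 0" using nd by (auto simp: nondegenerate_form_def)
    thus False using z x by auto
  qed
  show "x = y" if "x \<in> B" "y \<in> B" "y \<in> vec.span {x}" for x y
  proof (rule ccontr)
    assume "x \<noteq> y"
    hence "vec.span {x} \<subseteq> vec.span (B - {y})" using that by (intro vec.span_mono) auto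
    hence "vec.dependent B" using that vec.dependent_def by blast
    thus False using ind by simp
  qed
qed

lemma construct_iso:
  fixes d :: "'k::field^'n \<Rightarrow> 'k^'n \<Rightarrow> 'k"
  assumes bl: "bilinear_form d" and nd: "nondegenerate_form d"
    and obB: "orthogonal_basis d B" and obC: "orthogonal_basis d C"
    and c: "c \<noteq> 0" and sig: "bij_betw \<sigma> B C"
    and mu: "\<And>x. x \<in> B \<Longrightarrow> \<mu> x \<noteq> 0 \<and> \<mu> x ^ 2 * d (\<sigma> x) (\<sigma> x) = c * d x x"
  shows "\<exists>\<phi> c'. (\<phi>, c') \<in> Isom_star d \<and> (\<lambda>L. \<phi> ` L) ` basis_lines B = basis_lines C"
proof -
  have indB: "vec.independent B" and spB: "vec.span B = UNIV"
    and orthB: "\<forall>x\<in>B. \<forall>y\<in>B. x \<noteq> y \<longrightarrow> d x y = 0"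
    using obB by (auto simp: orthogonal_basis_def)
  have orthC: "\<forall>x\<in>C. \<forall>y\<in>C. x \<noteq> y \<longrightarrow> d x y = 0"
    using obC by (auto simp: orthogonal_basis_def)
  define \<phi> where "\<phi> = vec.construct B (\<lambda>x. \<mu> x *s \<sigma> x)"
  have lin: "Vector_Spaces.linear (*s) (*s) \<phi>" unfolding \<phi>_def by (rule vec.linear_construct[OF indB])
  have phiB: "\<phi> x = \<mu> x *s \<sigma> x" if "x \<in> B" for x
    unfolding \<phi>_def using vec.construct_basis[OF indB that] .
  have sigC: "\<sigma> x \<in> C" if "x \<in> B" for x using sig that by (auto simp: bij_betw_def)
  have siginj: "\<sigma> x \<noteq> \<sigma> y" if "x \<in> B" "y \<in> B" "x \<noteq> y" for x y
    using sig that by (auto simp: bij_betw_def inj_on_def)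
  have base: "d (\<phi> x) (\<phi> y) = c * d x y" if "x \<in> B" "y \<in> B" for x y
  proof (cases "x = y")
    case True
    thus ?thesis using that mu[of x] phiB[of x]
      by (simp add: bl_scale_l[OF bl] bl_scale_r[OF bl] power2_eq_square algebra_simps)
  next
    case False
    thus ?thesis using that phiB orthB orthC sigC siginj
      by (simp add: bl_scale_l[OF bl] bl_scale_r[OF bl])
  qed
  have step1: "\<forall>y\<in>B. d (\<phi> u) (\<phi> y) = c * d u y" for u
  proof -
    have "vec.subspace {u. \<forall>y\<in>B. d (\<phi> u) (\<phi> y) = c * d u y}"
      by (auto simp: vec.subspace_def vec.linear_0[OF lin] vec.linear_add[OF lin] vec.linear_scale[OF lin]
          bl_zero_l[OF bl] bl_add_l[OF bl] bl_scale_l[OF bl] algebra_simps)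
    thus ?thesis using vec.span_induct[of u B "\<lambda>u. \<forall>y\<in>B. d (\<phi> u) (\<phi> y) = c * d u y"] spB base by auto
  qed
  have form: "d (\<phi> u) (\<phi> v) = c * d u v" for u v
  proof -
    have "vec.subspace {v. d (\<phi> u) (\<phi> v) = c * d u v}"
      by (auto simp: vec.subspace_def vec.linear_0[OF lin] vec.linear_add[OF lin] vec.linear_scale[OF lin]
          bl_zero_r[OF bl] bl_add_r[OF bl] bl_scale_r[OF bl] algebra_simps)
    thus ?thesis using vec.span_induct[of v B "\<lambda>v. d (\<phi> u) (\<phi> v) = c * d u v"] spB step1 by auto
  qed
  have "inj \<phi>"
    unfolding vec.linear_inj_iff_eq_0[OF lin]
  proof (intro allI impI)
    fix u assume "\<phi> u = 0"
    hence "\<forall>v. c * d u v = 0" using form bl_zero_l[OF bl] by metis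
    hence "\<forall>v. d u v = 0" using c by auto
    thus "u = 0" using nd by (auto simp: nondegenerate_form_def)
  qed
  moreover have "surj \<phi>" using vec.linear_inj_imp_surj[OF lin] calculation .
  ultimately have "(\<phi>, c) \<in> Isom_star d" using lin c form by (auto simp: Isom_star_def bij_def)
  moreover have "(\<lambda>L. \<phi> ` L) ` basis_lines B = basis_lines C"
  proof -
    have "\<phi> ` vec.span {x} = vec.span {\<sigma> x}" if "x \<in> B" for x
    proof -
      have "\<phi> ` vec.span {x} = vec.span {\<mu> x *s \<sigma> x}"
        using vec.linear_span_image[OF lin, of "{x}"] phiB[OF that] by simp
      also have "\<dots> = vec.span {\<sigma> x}"
      proof -
        have m0: "\<mu> x \<noteq> 0" using mu[OF that] by simp
        have 1: "k *s \<sigma> x \<in> range (\<lambda>j. j *s (\<mu> x *s \<sigma> x))" for k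
          by (rule image_eqI[of _ _ "k / \<mu> x"]) (simp_all add: m0 vector_smult_assoc)
        have 2: "k *s (\<mu> x *s \<sigma> x) \<in> range (\<lambda>j. j *s \<sigma> x)" for k
          by (rule image_eqI[of _ _ "k * \<mu> x"]) (simp_all add: vector_smult_assoc)
        show ?thesis unfolding vec.span_singleton using 1 2 by blast
      qed
      finally show ?thesis .
    qed
    hence "(\<lambda>L. \<phi> ` L) ` basis_lines B = (\<lambda>x. vec.span {\<sigma> x}) ` B"
      unfolding basis_lines_def image_image by (intro image_cong) auto
    also have "\<dots> = (\<lambda>y. vec.span {y}) ` (\<sigma> ` B)" by (simp add: image_image)
    also have "\<dots> = basis_lines C" using sig by (simp add: bij_betw_def basis_lines_def)
    finally show ?thesis .
  qed
  ultimately show ?thesis by blast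
qed

lemma d_expand_l:
  fixes d :: "'k::field^'n \<Rightarrow> 'k^'n \<Rightarrow> 'k"
  assumes bl: "bilinear_form d"
  shows "d u v = (\<Sum>i\<in>UNIV. u$i * d (axis i 1) v)"
proof -
  have "d u v = d (\<Sum>i\<in>UNIV. u$i *s axis i 1) v" by (simp add: basis_expansion)
  also have "\<dots> = (\<Sum>i\<in>UNIV. u$i * d (axis i 1) v)" by (simp add: bl_sum_l[OF bl] bl_scale_l[OF bl])
  finally show ?thesis .
qed

lemma d_expand_r:
  fixes d :: "'k::field^'n \<Rightarrow> 'k^'n \<Rightarrow> 'k"
  assumes bl: "bilinear_form d"
  shows "d u v = (\<Sum>i\<in>UNIV. v$i * d u (axis i 1))"
proof -
  have "d u v = d u (\<Sum>i\<in>UNIV. v$i *s axis i 1)" by (simp add: basis_expansion)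
  also have "\<dots> = (\<Sum>i\<in>UNIV. v$i * d u (axis i 1))" by (simp add: bl_sum_r[OF bl] bl_scale_r[OF bl])
  finally show ?thesis .
qed

lemma similitude_sq:
  fixes d :: "'k::field^'n \<Rightarrow> 'k^'n \<Rightarrow> 'k"
  assumes bl: "bilinear_form d" and sym: "symmetric_form d" and nd: "nondegenerate_form d"
    and form: "\<And>u v. d (\<phi> u) (\<phi> v) = c * d u v"
  shows "\<exists>y. c ^ CARD('n) = y ^ 2"
proof -
  define G :: "'k^'n^'n" where "G = (\<chi> i j. d (axis i 1) (axis j 1))"
  define A :: "'k^'n^'n" where "A = (\<chi> k i. (\<phi> (axis i 1))$k)"
  have ent: "d (\<phi> (axis i 1)) (\<phi> (axis j 1)) = ((transpose A ** G) ** A)$i$j" for i j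
  proof -
    have "d (\<phi> (axis i 1)) (\<phi> (axis j 1)) = (\<Sum>k\<in>UNIV. A$k$i * d (axis k 1) (\<phi> (axis j 1)))"
      by (subst d_expand_l[OF bl]) (simp add: A_def)
    also have "\<dots> = (\<Sum>k\<in>UNIV. A$k$i * (\<Sum>l\<in>UNIV. A$l$j * G$k$l))"
      by (subst d_expand_r[OF bl]) (simp add: A_def G_def)
    also have "\<dots> = (\<Sum>k\<in>UNIV. \<Sum>l\<in>UNIV. A$k$i * G$k$l * A$l$j)"
      by (simp add: sum_distrib_left mult_ac)
    also have "\<dots> = (\<Sum>l\<in>UNIV. \<Sum>k\<in>UNIV. A$k$i * G$k$l * A$l$j)"
      by (rule sum.swap)
    also have "\<dots> = (\<Sum>l\<in>UNIV. (\<Sum>k\<in>UNIV. A$k$i * G$k$l) * A$l$j)"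
      by (simp add: sum_distrib_right)
    also have "\<dots> = ((transpose A ** G) ** A)$i$j"
      by (simp add: matrix_matrix_mult_def transpose_def)
    finally show ?thesis .
  qed
  have M: "(transpose A ** G) ** A = (\<chi> i. c *s G$i)"
    using ent form by (simp add: vec_eq_iff G_def)
  have "det G \<noteq> 0"
  proof -
    have "\<forall>x. G *v x = 0 \<longrightarrow> x = 0"
    proof (intro allI impI)
      fix x assume Gx: "G *v x = 0"
      have "d (axis i 1) x = (G *v x)$i" for i
        by (subst d_expand_r[OF bl]) (simp add: matrix_vector_mult_def G_def mult.commute)
      hence "d (axis i 1) x = 0" for i using Gx by simp
      hence "d u x = 0" for u by (subst d_expand_l[OF bl]) simp
      hence "\<forall>u. d x u = 0" using sym by (simp add: symmetric_form_def)
      thus "x = 0" using nd by (simp add: nondegenerate_form_def)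
    qed
    hence "invertible G" unfolding invertible_left_inverse matrix_left_invertible_ker .
    thus ?thesis by (simp add: invertible_det_nz)
  qed
  have "det ((transpose A ** G) ** A) = det A ^ 2 * det G"
    by (simp add: det_mul power2_eq_square)
  also have "det ((transpose A ** G) ** A) = c ^ CARD('n) * det G"
    unfolding M det_rows_mul by simp
  finally have "c ^ CARD('n) = det A ^ 2" using \<open>det G \<noteq> 0\<close> by simp
  thus ?thesis by blast
qed

lemma card_compl: "finite B \<Longrightarrow> card {x\<in>B. \<not> P x} = card B - card {x\<in>B. P x}"
proof -
  assume f: "finite B"
  have "{x\<in>B. \<not> P x} = B - {x\<in>B. P x}" by auto
  thus ?thesis using f by (simp add: card_Diff_subset)
qed

lemma match_bij:
  assumes fB: "finite B" and fC: "finite C"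
    and c1: "card {x\<in>B. P x} = card {y\<in>C. Q y}" and c2: "card {x\<in>B. \<not> P x} = card {y\<in>C. \<not> Q y}"
  shows "\<exists>\<sigma>. bij_betw \<sigma> B C \<and> (\<forall>x\<in>B. P x \<longleftrightarrow> Q (\<sigma> x))"
proof -
  obtain f where f: "bij_betw f {x\<in>B. P x} {y\<in>C. Q y}"
    using finite_same_card_bij[OF _ _ c1] fB fC by auto
  obtain g where g: "bij_betw g {x\<in>B. \<not> P x} {y\<in>C. \<not> Q y}"
    using finite_same_card_bij[OF _ _ c2] fB fC by auto
  define \<sigma> where "\<sigma> x = (if P x then f x else g x)" for x
  have "bij_betw \<sigma> {x\<in>B. P x} {y\<in>C. Q y}"
    using f by (rule bij_betw_cong[THEN iffD1, rotated]) (auto simp: \<sigma>_def)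
  moreover have "bij_betw \<sigma> {x\<in>B. \<not> P x} {y\<in>C. \<not> Q y}"
    using g by (rule bij_betw_cong[THEN iffD1, rotated]) (auto simp: \<sigma>_def)
  ultimately have "bij_betw \<sigma> ({x\<in>B. P x} \<union> {x\<in>B. \<not> P x}) ({y\<in>C. Q y} \<union> {y\<in>C. \<not> Q y})"
    by (rule bij_betw_combine) auto
  moreover have "{x\<in>B. P x} \<union> {x\<in>B. \<not> P x} = B" "{y\<in>C. Q y} \<union> {y\<in>C. \<not> Q y} = C" by auto
  ultimately have b: "bij_betw \<sigma> B C" by simp
  have "\<forall>x\<in>B. P x \<longleftrightarrow> Q (\<sigma> x)"
    using f g by (auto simp: \<sigma>_def bij_betw_def)
  with b show ?thesis by blast
qed

lemma sqr_root:
  fixes a b c :: "'k::field"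
  assumes "a \<noteq> 0" "b \<noteq> 0" "c \<noteq> 0" "sqr (c * a * b)"
  shows "\<exists>\<mu>. \<mu> \<noteq> 0 \<and> \<mu> ^ 2 * b = c * a"
proof -
  obtain w where w: "c * a * b = w ^ 2" using assms(4) by (auto simp: sqr_def)
  have "w \<noteq> 0" using w assms by auto
  moreover have "(w / b) ^ 2 * b = c * a"
    using w assms(2) by (simp add: power2_eq_square field_simps)
  ultimately show ?thesis using assms(2) by (intro exI[of _ "w / b"]) auto
qed

lemma construct2:
  fixes d :: "'k::field^'n \<Rightarrow> 'k^'n \<Rightarrow> 'k"
  assumes bl: "bilinear_form d" and nd: "nondegenerate_form d"
    and obB: "orthogonal_basis d B" and obC: "orthogonal_basis d C"
    and c: "c \<noteq> 0" and sig: "bij_betw \<sigma> B C"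
    and sq: "\<And>x. x \<in> B \<Longrightarrow> sqr (c * d x x * d (\<sigma> x) (\<sigma> x))"
  shows "\<exists>\<phi> c'. (\<phi>, c') \<in> Isom_star d \<and> (\<lambda>L. \<phi> ` L) ` basis_lines B = basis_lines C"
proof -
  define \<mu> where "\<mu> x = (SOME m. m \<noteq> 0 \<and> m ^ 2 * d (\<sigma> x) (\<sigma> x) = c * d x x)" for x
  have "\<mu> x \<noteq> 0 \<and> \<mu> x ^ 2 * d (\<sigma> x) (\<sigma> x) = c * d x x" if x: "x \<in> B" for x
  proof -
    have sx: "\<sigma> x \<in> C" using sig x by (auto simp: bij_betw_def)
    show ?thesis unfolding \<mu>_def
      by (rule someI_ex, rule sqr_root)
         (use ob_facts(4)[OF bl nd obB x] ob_facts(4)[OF bl nd obC sx] c sq[OF x] in auto)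
  qed
  thus ?thesis by (rule construct_iso[OF bl nd obB obC c sig])
qed

lemma iso_classes:
  fixes d :: "'k::field^'n \<Rightarrow> 'k^'n \<Rightarrow> 'k"
  assumes fin: "finite (UNIV :: 'k set)"
    and bl: "bilinear_form d" and nd: "nondegenerate_form d"
    and obB: "orthogonal_basis d B" and obC: "orthogonal_basis d C"
    and iso: "(\<phi>, c) \<in> Isom_star d" and lines: "(\<lambda>L. \<phi> ` L) ` basis_lines B = basis_lines C"
  shows "c \<noteq> 0" "sqr c \<Longrightarrow> address_nonsquares d B = address_nonsquares d C"
    "\<not> sqr c \<Longrightarrow> address_nonsquares d B = CARD('n) - address_nonsquares d C"
proof -
  have lin: "Vector_Spaces.linear (*s) (*s) \<phi>" and bj: "bij \<phi>" and c: "c \<noteq> 0"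
    and form: "\<And>u v. d (\<phi> u) (\<phi> v) = c * d u v"
    using iso by (auto simp: Isom_star_def)
  show "c \<noteq> 0" by fact
  have inj: "inj \<phi>" using bj by (simp add: bij_def)
  have img: "\<phi> ` vec.span {x} = vec.span {\<phi> x}" for x
    using vec.linear_span_image[OF lin, of "{x}"] by simp
  have ex: "\<exists>y\<in>C. vec.span {\<phi> x} = vec.span {y}" if "x \<in> B" for x
  proof -
    have "\<phi> ` vec.span {x} \<in> (\<lambda>L. \<phi> ` L) ` basis_lines B" using that by (auto simp: basis_lines_def)
    hence "\<phi> ` vec.span {x} \<in> basis_lines C" by (simp only: lines)
    thus ?thesis using img by (auto simp: basis_lines_def)
  qed
  define \<sigma> where "\<sigma> x = (SOME y. y \<in> C \<and> vec.span {\<phi> x} = vec.span {y})" for x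
  have sig: "\<sigma> x \<in> C \<and> vec.span {\<phi> x} = vec.span {\<sigma> x}" if "x \<in> B" for x
    unfolding \<sigma>_def using ex[OF that] by (rule someI2_bex) auto
  have key: "sqr (d (\<sigma> x) (\<sigma> x)) \<longleftrightarrow> (sqr c \<longleftrightarrow> sqr (d x x))" if x: "x \<in> B" for x
  proof -
    have "\<phi> x \<in> vec.span {\<sigma> x}" using sig[OF x] vec.span_superset[of "{\<phi> x}"] by auto
    then obtain l where l: "\<phi> x = l *s \<sigma> x" by (auto simp: vec.span_singleton)
    have a0: "d x x \<noteq> 0" using ob_facts(4)[OF bl nd obB x] .
    have b0: "d (\<sigma> x) (\<sigma> x) \<noteq> 0" using ob_facts(4)[OF bl nd obC] sig[OF x] by auto
    have "c * d x x = l^2 * d (\<sigma> x) (\<sigma> x)"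
      using form[of x x] l by (simp add: bl_scale_l[OF bl] bl_scale_r[OF bl] power2_eq_square mult.assoc)
    hence "c * d x x * d (\<sigma> x) (\<sigma> x) = (l * d (\<sigma> x) (\<sigma> x))^2"
      by (simp add: power2_eq_square)
    hence "sqr ((c * d x x) * d (\<sigma> x) (\<sigma> x))" by (auto simp: sqr_def)
    thus ?thesis using sqr_mult_iff[OF fin, of "c * d x x" "d (\<sigma> x) (\<sigma> x)"]
        sqr_mult_iff[OF fin c a0] a0 b0 c by auto
  qed
  have injs: "inj_on \<sigma> B"
  proof (rule inj_onI)
    fix x x' assume xx: "x \<in> B" "x' \<in> B" "\<sigma> x = \<sigma> x'"
    hence "vec.span {\<phi> x} = vec.span {\<phi> x'}" using sig by metis
    hence "\<phi> x' \<in> \<phi> ` vec.span {x}" using img vec.span_superset[of "{\<phi> x'}"] by auto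
    then obtain z where z: "z \<in> vec.span {x}" "\<phi> x' = \<phi> z" by auto
    hence "x' \<in> vec.span {x}" using inj by (auto dest: injD)
    thus "x = x'" using ob_facts(5)[OF bl nd obB] xx by auto
  qed
  have surjs: "\<sigma> ` B = C"
  proof
    show "\<sigma> ` B \<subseteq> C" using sig by auto
    show "C \<subseteq> \<sigma> ` B"
    proof
      fix y assume y: "y \<in> C"
      hence "vec.span {y} \<in> (\<lambda>L. \<phi> ` L) ` basis_lines B" using lines by (auto simp: basis_lines_def)
      then obtain x where x: "x \<in> B" "vec.span {y} = \<phi> ` vec.span {x}" by (auto simp: basis_lines_def)
      hence "vec.span {y} = vec.span {\<sigma> x}" using img sig by auto
      hence "y \<in> vec.span {\<sigma> x}" using vec.span_superset[of "{y}"] by auto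
      hence "\<sigma> x = y" using ob_facts(5)[OF bl nd obC] sig x y by auto
      thus "y \<in> \<sigma> ` B" using x by auto
    qed
  qed
  have fB: "finite B" using ob_facts(1)[OF bl nd obB] .
  have fC: "finite C" using ob_facts(1)[OF bl nd obC] .
  have transfer: "card {x\<in>B. P (\<sigma> x)} = card {y\<in>C. P y}" for P
  proof -
    have "\<sigma> ` {x\<in>B. P (\<sigma> x)} = {y\<in>C. P y}" using surjs by auto
    moreover have "inj_on \<sigma> {x\<in>B. P (\<sigma> x)}" using injs by (rule inj_on_subset) auto
    ultimately show ?thesis using card_image by metis
  qed
  show "address_nonsquares d B = address_nonsquares d C" if sc: "sqr c"
  proof -
    have "{x\<in>B. \<not> sqr (d x x)} = {x\<in>B. \<not> sqr (d (\<sigma> x) (\<sigma> x))}" using key sc by auto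
    thus ?thesis unfolding address_nonsquares_def using transfer[of "\<lambda>y. \<not> sqr (d y y)"]
      by (simp add: sqr_def)
  qed
  show "address_nonsquares d B = CARD('n) - address_nonsquares d C" if sc: "\<not> sqr c"
  proof -
    have "{x\<in>B. \<not> sqr (d x x)} = {x\<in>B. sqr (d (\<sigma> x) (\<sigma> x))}" using key sc by auto
    hence "card {x\<in>B. \<not> sqr (d x x)} = card {y\<in>C. sqr (d y y)}"
      using transfer[of "\<lambda>y. sqr (d y y)"] by simp
    also have "\<dots> = card C - card {y\<in>C. \<not> sqr (d y y)}"
      using card_compl[OF fC, of "\<lambda>y. \<not> sqr (d y y)"] by simp
    finally show ?thesis unfolding address_nonsquares_def ob_facts(2)[OF bl nd obC]
      by (simp add: sqr_def)
  qed
qed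

theorem corollary6p4:
  fixes d :: "'k::field^'n \<Rightarrow> 'k^'n \<Rightarrow> 'k"
    and B C :: "('k^'n) set" and s r n :: nat
  assumes "finite (UNIV :: 'k set)"
    and "odd CHAR('k)"
    and "bilinear_form d" and "symmetric_form d" and "nondegenerate_form d"
    and "n = CARD('n)"
    and "orthogonal_basis d B" and "orthogonal_basis d C"
    and "s = address_nonsquares d B" and "r = address_nonsquares d C"
  shows "(odd n \<longrightarrow>
            ((\<exists>\<phi> c. (\<phi>, c) \<in> Isom_star d \<and> (\<lambda>L. \<phi> ` L) ` basis_lines B = basis_lines C)
             \<longleftrightarrow> s = r))
       \<and> (even n \<longrightarrow>
            ((\<exists>\<phi> c. (\<phi>, c) \<in> Isom_star d \<and> (\<lambda>L. \<phi> ` L) ` basis_lines B = basis_lines C)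
             \<longleftrightarrow> s = r \<or> s = n - r))"
proof -
  let ?OI = "\<exists>\<phi> c. (\<phi>, c) \<in> Isom_star d \<and> (\<lambda>L. \<phi> ` L) ` basis_lines B = basis_lines C"
  note fin = assms(1) and bl = assms(3) and sym = assms(4) and nd = assms(5)
    and obB = assms(7) and obC = assms(8)
  have fB: "finite B" and fC: "finite C" using ob_facts(1)[OF bl nd obB] ob_facts(1)[OF bl nd obC] .
  have cB: "card B = n" and cC: "card C = n" using ob_facts(2)[OF bl nd obB] ob_facts(2)[OF bl nd obC] assms(6) by auto
  have sdef: "card {x\<in>B. \<not> sqr (d x x)} = s" and rdef: "card {y\<in>C. \<not> sqr (d y y)} = r"
    using assms(9,10) by (simp_all add: address_nonsquares_def sqr_def)
  have sB: "card {x\<in>B. sqr (d x x)} = n - s"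
    using card_compl[OF fB, of "\<lambda>x. \<not> sqr (d x x)"] sdef cB by simp
  have sC: "card {y\<in>C. sqr (d y y)} = n - r"
    using card_compl[OF fC, of "\<lambda>x. \<not> sqr (d x x)"] rdef cC by simp
  have rle: "r \<le> n" using rdef cC card_mono[OF fC, of "{y\<in>C. \<not> sqr (d y y)}"] by auto
  have fwd: "(s = r \<or> s = n - r) \<and> (odd n \<longrightarrow> s = r)" if ?OI
  proof -
    from that obtain \<phi> c where iso: "(\<phi>, c) \<in> Isom_star d"
      and lines: "(\<lambda>L. \<phi> ` L) ` basis_lines B = basis_lines C" by blast
    note ic = iso_classes[OF fin bl nd obB obC iso lines]
    show ?thesis
    proof (cases "sqr c")
      case True
      thus ?thesis using ic assms(9,10) by simp
    next
      case False
      have "\<not> odd n"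
      proof
        assume odd: "odd n"
        have "\<And>u v. d (\<phi> u) (\<phi> v) = c * d u v" using iso by (auto simp: Isom_star_def)
        from similitude_sq[OF bl sym nd this] obtain y where y: "c ^ n = y ^ 2" using assms(6) by auto
        from odd obtain m where m: "n = Suc (2 * m)" using oddE by (metis Suc_eq_plus1)
        have cm: "c ^ m \<noteq> 0" using ic(1) by simp
        have "c ^ n = c * (c ^ m) ^ 2" by (simp add: m power_mult power2_eq_square[symmetric] power_mult_distrib mult.commute power_even_eq)
        hence "c = (y / c ^ m) ^ 2" using y cm by (simp add: power_divide field_simps)
        thus False using False by (auto simp: sqr_def)
      qed
      thus ?thesis using ic(3)[OF False] assms(6,9,10) by simp
    qed
  qed
  have bwd1: ?OI if sr0: "s = r"
  proof -
    obtain \<sigma> where sig: "bij_betw \<sigma> B C" and cl: "\<forall>x\<in>B. sqr (d x x) \<longleftrightarrow> sqr (d (\<sigma> x) (\<sigma> x))"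
    proof -
      have c1: "card {x\<in>B. sqr (d x x)} = card {y\<in>C. sqr (d y y)}" using sB sC sr0 by simp
      have c2: "card {x\<in>B. \<not> sqr (d x x)} = card {y\<in>C. \<not> sqr (d y y)}" using sdef rdef sr0 by simp
      show ?thesis using match_bij[OF fB fC c1 c2] that by blast
    qed
    show ?thesis
    proof (rule construct2[OF bl nd obB obC _ sig, of 1])
      fix x assume x: "x \<in> B"
      have a0: "d x x \<noteq> 0" using ob_facts(4)[OF bl nd obB x] .
      have b0: "d (\<sigma> x) (\<sigma> x) \<noteq> 0" using ob_facts(4)[OF bl nd obC] sig x by (auto simp: bij_betw_def)
      show "sqr (1 * d x x * d (\<sigma> x) (\<sigma> x))" using sqr_mult_iff[OF fin a0 b0] cl x by simp
    qed simp
  qed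
  have bwd2: ?OI if sr: "s = n - r" and ne: "s \<noteq> r"
  proof -
    have "\<exists>c::'k. c \<noteq> 0 \<and> \<not> sqr c"
    proof (cases "s > 0")
      case True
      have "{x\<in>B. \<not> sqr (d x x)} \<noteq> {}"
      proof
        assume e: "{x\<in>B. \<not> sqr (d x x)} = {}"
        have "s = 0" using sdef unfolding e by simp
        thus False using \<open>s > 0\<close> by simp
      qed
      then obtain x where x: "x \<in> B" "\<not> sqr (d x x)" by auto
      have "d x x \<noteq> 0" using ob_facts(4)[OF bl nd obB x(1)] .
      with x(2) show ?thesis by (intro exI[of _ "d x x"]) simp
    next
      case False
      hence "r > 0" using ne by auto
      have "{x\<in>C. \<not> sqr (d x x)} \<noteq> {}"
      proof
        assume e: "{x\<in>C. \<not> sqr (d x x)} = {}"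
        have "r = 0" using rdef unfolding e by simp
        thus False using \<open>r > 0\<close> by simp
      qed
      then obtain x where x: "x \<in> C" "\<not> sqr (d x x)" by auto
      have "d x x \<noteq> 0" using ob_facts(4)[OF bl nd obC x(1)] .
      with x(2) show ?thesis by (intro exI[of _ "d x x"]) simp
    qed
    then obtain c :: 'k where c: "c \<noteq> 0" "\<not> sqr c" by blast
    obtain \<sigma> where sig: "bij_betw \<sigma> B C" and cl: "\<forall>x\<in>B. sqr (d x x) \<longleftrightarrow> \<not> sqr (d (\<sigma> x) (\<sigma> x))"
    proof -
      have c1: "card {x\<in>B. sqr (d x x)} = card {y\<in>C. \<not> sqr (d y y)}" using sB rdef sr rle by simp
      have c2: "card {x\<in>B. \<not> sqr (d x x)} = card {y\<in>C. \<not> \<not> sqr (d y y)}" using sdef sC sr by simp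
      show ?thesis using match_bij[OF fB fC c1 c2] that by blast
    qed
    show ?thesis
    proof (rule construct2[OF bl nd obB obC c(1) sig])
      fix x assume x: "x \<in> B"
      have a0: "d x x \<noteq> 0" using ob_facts(4)[OF bl nd obB x] .
      have b0: "d (\<sigma> x) (\<sigma> x) \<noteq> 0" using ob_facts(4)[OF bl nd obC] sig x by (auto simp: bij_betw_def)
      have ca0: "c * d x x \<noteq> 0" using c a0 by simp
      show "sqr (c * d x x * d (\<sigma> x) (\<sigma> x))"
        using sqr_mult_iff[OF fin ca0 b0] sqr_mult_iff[OF fin c(1) a0] cl x c(2) by simp
    qed
  qed
  show ?thesis using fwd bwd1 bwd2 by blast
qed

end
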